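(* Let $k\ge 2$ and let $\mathbf{x}$ be a random vector in $\mathbb{R}^k$ (asset returns) with mean $\boldsymbol{\mu}=E(\mathbf{x})$ and covariance matrix $\boldsymbol{\Sigma}=\mathrm{Var}(\mathbf{x})$, symmetric and positive definite. Let $n\ge 2$, let $\alpha_1,\dots,\alpha_n>0$ be pairwise distinct risk aversions, $\beta_1,\dots,\beta_n>0$ with $\sum_{i=1}^n\beta_i=1$ relative wealth proportions, and $\phi_1,\dots,\phi_n>0$ mimicking coefficients. For a $k\times n$ matrix $\mathbf{W}=(\mathbf{w}_1,\dots,\mathbf{w}_n)$ of portfolio weight vectors (with $\mathbf{w}_i'\mathbf{1}=1$, where $\mathbf{1}\in\mathbb{R}^k$ is the vector of ones) put $\mathbf{w}_{\mathbf{f}}=\mathbf{W}\boldsymbol{\beta}=\sum_{i=1}^n\beta_i\mathbf{w}_i$, $\boldsymbol\beta=(\beta_1,\dots,\beta_n)'$, and $$EU_i^*=\mathbf{w}_i'\boldsymbol{\mu}-\frac{\alpha_i}{2}\mathbf{w}_i'\boldsymbol{\Sigma}\mathbf{w}_i-\frac{\phi_i}{2}(\mathbf{w}_i-\mathbf{w}_{\mathbf{f}})'\boldsymbol{\Sigma}(\mathbf{w}_i-\mathbf{w}_{\mathbf{f}}),\qquad EU^*=\sum_{i=1}^n\beta_i EU_i^*.$$ Then $$EU^*=E(\boldsymbol{\beta}'\mathbf{W}'\mathbf{x})-\frac12 E\big[(\mathbf{x}-E(\mathbf{x}))'\mathbf{W}\mathbf{A}\mathbf{W}'(\mathbf{x}-E(\mathbf{x}))\big]=\boldsymbol{\beta}'\mathbf{W}'\boldsymbol{\mu}-\frac12\operatorname{tr}(\mathbf{A}\mathbf{W}'\boldsymbol{\Sigma}\mathbf{W}),$$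 where the $n\times n$ matrix $\mathbf{A}$ is $$\mathbf{A}=(\mathbf{A}_0+\boldsymbol{\Phi})\mathbf{B}+(\bar\phi\mathbf{I}_n-2\boldsymbol{\Phi})\boldsymbol{\beta}\boldsymbol{\beta}',\qquad \bar\phi=\boldsymbol\beta'\boldsymbol\phi=\sum_{i=1}^n\beta_i\phi_i,$$ with $\mathbf{A}_0=\mathrm{diag}(\alpha_1,\dots,\alpha_n)$, $\boldsymbol{\Phi}=\mathrm{diag}(\phi_1,\dots,\phi_n)$, $\mathbf{B}=\mathrm{diag}(\beta_1,\dots,\beta_n)$, $\boldsymbol\phi=(\phi_1,\dots,\phi_n)'$, and $\mathbf{I}_n$ the $n\times n$ identity.
   Context: $EU_i^*$ is the mean-variance objective of investor $i$ penalized by the $\boldsymbol\Sigma$-weighted squared distance of his portfolio from the aggregate (wealth-weighted) portfolio $\mathbf{w}_{\mathbf f}$; $EU^*$ is the aggregate objective of a mutual fund pooling the investors. Short sales are allowed (weights may be negative). *)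

theory Defs
  imports "HOL-Probability.Probability"
begin

text \<open>Matrices: a k x n matrix is real^'n^'k (rows indexed by 'k). Vectors of
  parameters alpha, beta, phi are in real^'n.\<close>

definition diag_mat :: "real^'n \<Rightarrow> real^'n^'n" where
  "diag_mat v = (\<chi> i j. if i = j then v $ i else 0)"

definition outer_prod :: "real^'n \<Rightarrow> real^'m \<Rightarrow> real^'m^'n" where
  "outer_prod u v = (\<chi> i j. u $ i * v $ j)"

definition wf :: "real^'n^'k \<Rightarrow> real^'n \<Rightarrow> real^'k" where
  "wf W \<beta> = W *v \<beta>"

definition EU_i :: "real^'k \<Rightarrow> real^'k^'k \<Rightarrow> real^'n \<Rightarrow> real^'n \<Rightarrow> real^'n
                     \<Rightarrow> real^'n^'k \<Rightarrow> 'n \<Rightarrow> real" where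
  "EU_i \<mu> \<Sigma> \<alpha> \<phi> \<beta> W i =
     column i W \<bullet> \<mu>
     - \<alpha> $ i / 2 * (column i W \<bullet> (\<Sigma> *v column i W))
     - \<phi> $ i / 2 * ((column i W - wf W \<beta>) \<bullet> (\<Sigma> *v (column i W - wf W \<beta>)))"

definition EU :: "real^'k \<Rightarrow> real^'k^'k \<Rightarrow> real^'n \<Rightarrow> real^'n \<Rightarrow> real^'n
                   \<Rightarrow> real^'n^'k \<Rightarrow> real" where
  "EU \<mu> \<Sigma> \<alpha> \<phi> \<beta> W = (\<Sum>i\<in>UNIV. \<beta> $ i * EU_i \<mu> \<Sigma> \<alpha> \<phi> \<beta> W i)"

definition A_mat :: "real^'n \<Rightarrow> real^'n \<Rightarrow> real^'n \<Rightarrow> real^'n^'n" where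
  "A_mat \<alpha> \<phi> \<beta> =
     (diag_mat \<alpha> + diag_mat \<phi>) ** diag_mat \<beta>
     + ((\<beta> \<bullet> \<phi>) *\<^sub>R mat 1 - 2 *\<^sub>R diag_mat \<phi>) ** outer_prod \<beta> \<beta>"

definition mean_vec :: "'a measure \<Rightarrow> ('a \<Rightarrow> real^'k) \<Rightarrow> real^'k" where
  "mean_vec M X = (\<chi> j. integral\<^sup>L M (\<lambda>\<omega>. X \<omega> $ j))"

definition cov_mat :: "'a measure \<Rightarrow> ('a \<Rightarrow> real^'k) \<Rightarrow> real^'k^'k" where
  "cov_mat M X = (\<chi> i j. integral\<^sup>L M (\<lambda>\<omega>. (X \<omega> $ i - mean_vec M X $ i) * (X \<omega> $ j - mean_vec M X $ j)))"

end

theory Submission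
  imports Defs
begin
lemma mv_sum: "(C::real^'k^'k) *v (\<Sum>b\<in>I. f b) = (\<Sum>b\<in>I. C *v f b)"
  by (induction I rule: infinite_finite_induct) (auto simp: matrix_vector_right_distrib)
lemma wf_sum: "wf W \<beta> = (\<Sum>b\<in>UNIV. \<beta>$b *\<^sub>R column b W)"
  unfolding wf_def by (simp add: matrix_mult_sum scalar_mult_eq_scaleR)
lemma q_exp:
  fixes C :: "real^'k^'k" and W :: "real^'n^'k"
  defines "S \<equiv> \<lambda>a b. column a W \<bullet> (C *v column b W)"
  shows "(column i W - wf W \<beta>) \<bullet> (C *v (column i W - wf W \<beta>)) =
    S i i - (\<Sum>b\<in>UNIV. \<beta>$b * S i b) - (\<Sum>b\<in>UNIV. \<beta>$b * S b i)
    + (\<Sum>a\<in>UNIV. \<Sum>b\<in>UNIV. \<beta>$a * \<beta>$b * S a b)"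
  unfolding wf_sum S_def
  apply (simp add: matrix_vector_mult_diff_distrib mv_sum matrix_vector_mult_scaleR inner_diff_left inner_diff_right inner_sum_left inner_sum_right sum_distrib_left mult.assoc sum_subtractf right_diff_distrib)
  apply (subst sum.swap) by (simp add: mult.left_commute)
lemma ifm: "(if P then x else (0::real)) * y = (if P then x * y else 0)" by simp
lemma diag_mult: "(diag_mat v ** B) $ a $ b = v$a * B$a$b"
  by (simp add: matrix_matrix_mult_def diag_mat_def ifm)
lemma A_entry: "A_mat \<alpha> \<phi> \<beta> $ a $ b = (if a = b then (\<alpha>$a + \<phi>$a) * \<beta>$a else 0) + ((\<beta> \<bullet> \<phi>) - 2 * \<phi>$a) * \<beta>$a * \<beta>$b"
proof -
  have "A_mat \<alpha> \<phi> \<beta> = diag_mat (\<alpha> + \<phi>) ** diag_mat \<beta> + diag_mat ((\<beta> \<bullet> \<phi>) *\<^sub>R 1 - 2 *\<^sub>R \<phi>) ** outer_prod \<beta> \<beta>"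
  proof -
    have e1: "diag_mat \<alpha> + diag_mat \<phi> = diag_mat (\<alpha> + \<phi>)"
      by (simp add: vec_eq_iff diag_mat_def)
    have e2: "(\<beta> \<bullet> \<phi>) *\<^sub>R mat 1 - 2 *\<^sub>R diag_mat \<phi> = diag_mat ((\<beta> \<bullet> \<phi>) *\<^sub>R 1 - 2 *\<^sub>R \<phi>)"
      by (simp add: vec_eq_iff diag_mat_def mat_def)
    show ?thesis unfolding A_mat_def e1 e2 ..
  qed
  then show ?thesis by (simp add: diag_mult outer_prod_def algebra_simps, simp add: diag_mat_def)
qed
lemma S_entry: "column a W \<bullet> ((C::real^'k^'k) *v column b (W::real^'n^'k)) = (transpose W ** C ** W) $ a $ b"
  apply (simp add: inner_vec_def matrix_vector_mult_def matrix_matrix_mult_def transpose_def column_def sum_distrib_left sum_distrib_right)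
  apply (subst sum.swap) by (simp add: algebra_simps)

lemma S_sym: assumes "transpose C = (C::real^'k^'k)"
  shows "u \<bullet> (C *v v) = v \<bullet> (C *v u)"
proof -
  have "u \<bullet> (C *v v) = (u v* C) \<bullet> v" by (simp add: dot_lmul_matrix)
  also have "u v* C = C *v u" by (metis assms vector_transpose_matrix)
  finally show ?thesis by (simp add: inner_commute)
qed

lemma alg:
  fixes S :: "'n::finite \<Rightarrow> 'n \<Rightarrow> real"
  assumes sym: "\<And>a b. S a b = S b a"
  shows "(\<Sum>i\<in>UNIV. be i * (L i - al i / 2 * S i i - ph i / 2 * (S i i - (\<Sum>b\<in>UNIV. be b * S i b) - (\<Sum>b\<in>UNIV. be b * S b i)
    + (\<Sum>a\<in>UNIV. \<Sum>b\<in>UNIV. be a * be b * S a b))))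
   = (\<Sum>i\<in>UNIV. be i * L i) - 1/2 * (\<Sum>a\<in>UNIV. \<Sum>b\<in>UNIV. ((if a = b then (al a + ph a) * be a else 0) + ((\<Sum>i\<in>UNIV. be i * ph i) - 2 * ph a) * be a * be b) * S b a)"
proof -
  have e: "\<And>i. (\<Sum>b\<in>UNIV. be b * S i b) = (\<Sum>b\<in>UNIV. be b * S b i)" using sym by simp
  have d: "\<And>a. (\<Sum>b\<in>UNIV. (if a = b then (al a + ph a) * be a else 0) * S b a) = (al a + ph a) * be a * S a a"
    by (simp add: ifm)
  have t: "(\<Sum>n\<in>UNIV. \<Sum>na\<in>UNIV. \<Sum>nb\<in>UNIV. be n * (be na * (be nb * (ph nb * S na n))) / 2) =
     (\<Sum>i\<in>UNIV. \<Sum>n\<in>UNIV. \<Sum>na\<in>UNIV. be i * (be n * (be na * (ph i * S n na))) / 2)"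
    apply (subst sum.swap) apply (subst (2) sum.swap) apply (subst sum.swap)
    apply (rule sum.cong, simp)+ using sym by (simp add: algebra_simps)
  have ifm2: "\<And>y x P. y * (if P then x else (0::real)) = (if P then y * x else 0)" by simp
  show ?thesis
    unfolding e distrib_right sum.distrib d
    by (simp add: sum_distrib_left sum_distrib_right sum.distrib sum_subtractf algebra_simps t ifm ifm2)
qed
lemma lin: "(\<beta>::real^'n) \<bullet> (transpose (W::real^'n^'k) *v x) = (\<Sum>j\<in>UNIV. (W *v \<beta>) $ j * x $ j)"
proof -
  have "\<beta> \<bullet> (transpose W *v x) = (x v* W) \<bullet> \<beta>"
    by (simp add: inner_commute)
  also have "\<dots> = x \<bullet> (W *v \<beta>)" by (rule dot_lmul_matrix)
  finally have "\<beta> \<bullet> (transpose W *v x) = x \<bullet> (W *v \<beta>)" .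
  then show ?thesis by (simp add: inner_vec_def mult.commute)
qed

lemma quad: "(x::real^'k) \<bullet> (Q *v x) = (\<Sum>i\<in>UNIV. \<Sum>j\<in>UNIV. Q$i$j * (x$i * x$j))"
  by (simp add: inner_vec_def matrix_vector_mult_def sum_distrib_left algebra_simps)

lemma tr_sum: "(\<Sum>i\<in>UNIV. \<Sum>j\<in>UNIV. (Q::real^'k^'k)$i$j * D$j$i) = trace (Q ** D)"
  by (simp add: trace_def matrix_matrix_mult_def)

lemma tr_sum2: "trace ((A::real^'n^'n) ** B) = (\<Sum>a\<in>UNIV. \<Sum>b\<in>UNIV. A$a$b * B$b$a)"
  by (simp add: trace_def matrix_matrix_mult_def)

lemma absprod: "\<bar>(a::real) * b\<bar> \<le> \<bar>a^2 + b^2\<bar>"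
proof -
  have "0 \<le> (\<bar>a\<bar> - \<bar>b\<bar>)^2" by simp
  then have "2 * \<bar>a\<bar> * \<bar>b\<bar> \<le> a^2 + b^2" by (simp add: power2_eq_square algebra_simps)
  moreover have "0 \<le> a^2 + b^2" by simp
  moreover have "0 \<le> \<bar>a\<bar> * \<bar>b\<bar>" by simp
  moreover have "\<bar>a * b\<bar> = \<bar>a\<bar> * \<bar>b\<bar>" by (rule abs_mult)
  ultimately show ?thesis by linarith
qed

theorem proposition1:
  fixes M :: "'a measure" and X :: "'a \<Rightarrow> real^'k"
    and \<alpha> \<beta> \<phi> :: "real^'n" and W :: "real^'n^'k"
  assumes "prob_space M"
    and "CARD('k) \<ge> 2" and "CARD('n) \<ge> 2"
    and "X \<in> borel_measurable M"
    and "\<And>j. integrable M (\<lambda>\<omega>. X \<omega> $ j)"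
    and "\<And>j. integrable M (\<lambda>\<omega>. (X \<omega> $ j)\<^sup>2)"
    and "\<forall>v::real^'k. v \<noteq> 0 \<longrightarrow> v \<bullet> (cov_mat M X *v v) > 0"
    and "\<And>i. \<alpha> $ i > 0" and "inj (\<lambda>i. \<alpha> $ i)"
    and "\<And>i. \<beta> $ i > 0" and "(\<Sum>i\<in>UNIV. \<beta> $ i) = 1"
    and "\<And>i. \<phi> $ i > 0"
    and "\<And>i. column i W \<bullet> (\<chi> j. 1) = 1"
  shows "EU (mean_vec M X) (cov_mat M X) \<alpha> \<phi> \<beta> W =
           integral\<^sup>L M (\<lambda>\<omega>. \<beta> \<bullet> (transpose W *v X \<omega>))
           - 1/2 * integral\<^sup>L M (\<lambda>\<omega>. (X \<omega> - mean_vec M X) \<bullet>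
                 ((W ** A_mat \<alpha> \<phi> \<beta> ** transpose W) *v (X \<omega> - mean_vec M X)))
       \<and> integral\<^sup>L M (\<lambda>\<omega>. \<beta> \<bullet> (transpose W *v X \<omega>))
           - 1/2 * integral\<^sup>L M (\<lambda>\<omega>. (X \<omega> - mean_vec M X) \<bullet>
                 ((W ** A_mat \<alpha> \<phi> \<beta> ** transpose W) *v (X \<omega> - mean_vec M X)))
         = \<beta> \<bullet> (transpose W *v mean_vec M X)
           - 1/2 * trace (A_mat \<alpha> \<phi> \<beta> ** transpose W ** cov_mat M X ** W)"
proof -
  interpret P: prob_space M by fact
  define m where "m = mean_vec M X"
  define C where "C = cov_mat M X"
  note Xi = assms(5)
  have D2: "integrable M (\<lambda>\<omega>. (X \<omega> $ i - m$i)^2)" for i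
    using assms(6) Xi by (simp add: power2_diff)
  have Xm: "(\<lambda>\<omega>. X \<omega> $ i) \<in> borel_measurable M" for i using Xi by blast
  have Pr: "integrable M (\<lambda>\<omega>. (X \<omega> $ i - m$i) * (X \<omega> $ j - m$j))" for i j
  proof (rule Bochner_Integration.integrable_bound[where f="\<lambda>\<omega>. (X \<omega> $ i - m$i)^2 + (X \<omega> $ j - m$j)^2"])
    show "integrable M (\<lambda>\<omega>. (X \<omega> $ i - m$i)^2 + (X \<omega> $ j - m$j)^2)" using D2 by simp
    show "(\<lambda>\<omega>. (X \<omega> $ i - m$i) * (X \<omega> $ j - m$j)) \<in> borel_measurable M"
      using Xm by measurable
    show "AE x in M. norm ((X x $ i - m$i) * (X x $ j - m$j)) \<le> norm ((X x $ i - m$i)^2 + (X x $ j - m$j)^2)"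
      using absprod by simp
  qed
  have Csym: "transpose C = C"
    by (simp add: C_def cov_mat_def transpose_def vec_eq_iff mult.commute)
  have I1: "integral\<^sup>L M (\<lambda>\<omega>. \<beta> \<bullet> (transpose W *v X \<omega>)) = \<beta> \<bullet> (transpose W *v m)"
    unfolding lin using Xi by (simp add: m_def mean_vec_def)
  define Q where "Q = W ** A_mat \<alpha> \<phi> \<beta> ** transpose W"
  have I2: "integral\<^sup>L M (\<lambda>\<omega>. (X \<omega> - m) \<bullet> (Q *v (X \<omega> - m))) = (\<Sum>i\<in>UNIV. \<Sum>j\<in>UNIV. Q$i$j * C$i$j)"
    unfolding quad using Pr by (simp add: C_def cov_mat_def m_def)
  have I3: "(\<Sum>i\<in>UNIV. \<Sum>j\<in>UNIV. Q$i$j * C$i$j) = trace (A_mat \<alpha> \<phi> \<beta> ** transpose W ** C ** W)"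
  proof -
    have "(\<Sum>i\<in>UNIV. \<Sum>j\<in>UNIV. Q$i$j * C$i$j) = trace (Q ** transpose C)"
      by (simp add: tr_sum[symmetric] transpose_def)
    also have "\<dots> = trace (W ** (A_mat \<alpha> \<phi> \<beta> ** transpose W ** C))"
      by (simp add: Csym Q_def matrix_mul_assoc)
    also have "\<dots> = trace (A_mat \<alpha> \<phi> \<beta> ** transpose W ** C ** W)"
      by (rule trace_mul_sym)
    finally show ?thesis .
  qed
  define S where "S = (\<lambda>a b. column a W \<bullet> (C *v column b W))"
  have Ssym: "S a b = S b a" for a b unfolding S_def by (rule S_sym[OF Csym])
  have E: "EU m C \<alpha> \<phi> \<beta> W = \<beta> \<bullet> (transpose W *v m) - 1/2 * trace (A_mat \<alpha> \<phi> \<beta> ** transpose W ** C ** W)"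
  proof -
    have L: "(\<Sum>i\<in>UNIV. \<beta>$i * (column i W \<bullet> m)) = \<beta> \<bullet> (transpose W *v m)"
      by (simp add: inner_vec_def matrix_vector_mult_def transpose_def column_def sum_distrib_left)
    have T: "trace (A_mat \<alpha> \<phi> \<beta> ** transpose W ** C ** W) =
      (\<Sum>a\<in>UNIV. \<Sum>b\<in>UNIV. ((if a = b then (\<alpha>$a + \<phi>$a) * \<beta>$a else 0) + ((\<Sum>i\<in>UNIV. \<beta>$i * \<phi>$i) - 2 * \<phi>$a) * \<beta>$a * \<beta>$b) * S b a)"
    proof -
      have as: "A_mat \<alpha> \<phi> \<beta> ** transpose W ** C ** W = A_mat \<alpha> \<phi> \<beta> ** (transpose W ** C ** W)"
        by (simp add: matrix_mul_assoc)
      show ?thesis unfolding S_def S_entry unfolding as tr_sum2 A_entry inner_vec_def by simp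
    qed
    show ?thesis
      unfolding EU_def EU_i_def q_exp L[symmetric] T
      using alg[of S, OF Ssym, where be="\<lambda>i. \<beta>$i" and L="\<lambda>i. column i W \<bullet> m" and al="\<lambda>i. \<alpha>$i" and ph="\<lambda>i. \<phi>$i"]
      by (simp add: S_def)
  qed
  show ?thesis
    using E I1 I2 I3 by (simp add: m_def C_def Q_def)
qed

end
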